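(* Let $\mathscr Q_n$ be a non-singular quadric in $\mathrm{PG}(n,2)$ of projective index $g\ge1$, let $0\le s<g$, let $\alpha_s$ be an $s$-dimensional subspace contained in $\mathscr Q_n$, and let $\Gamma_s$ be the graph constructed from $\alpha_s$ as described below. Then the maximum size of a clique in $\Gamma_s$ is $2^{g+1}-1$.
   Context: A non-singular quadric $\mathscr Q_n$ in $\mathrm{PG}(n,2)$ is the point set of a non-degenerate quadric; its projective index $g$ is the largest dimension of a projective subspace contained in $\mathscr Q_n$. The point-graph $\Gamma$ has vertex set the points of $\mathscr Q_n$, two distinct points adjacent iff the line joining them is contained in $\mathscr Q_n$. A point $X$ of $\mathscr Q_n$ has type (i) if $X\in\alpha_s$; type (ii) if $X\notin\alpha_s$ and $\langle\alpha_s,X\rangle\subseteq\mathscr Q_n$; type (iii) otherwise. Let $\mathcal X_s$ be the type (ii) points and $\mathcal Y_s$ the points of type (i) or (iii). The graph $\Gamma_s$ has the same vertex set as $\Gamma$ and the same edges, except that for each vertex $R\in\mathcal Y_s$ having exactly $\frac12|\mathcal X_s|$ neighbours in $\mathcal X_s$ (in $\Gamma$), those edges are deleted and $R$ is joined instead to the other $\frac12|\mathcal X_s|$ vertices of $\mathcal X_s$. *)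

theory Defs
  imports Main "HOL-Library.Z2"
begin

text \<open>Vectors of GF(2)^(n+1): functions nat => bit vanishing outside {0..n}.
  Points of PG(n,2): nonzero such vectors.\<close>

definition vecs :: "nat \<Rightarrow> (nat \<Rightarrow> bit) set" where
  "vecs n = {v. \<forall>i>n. v i = 0}"

definition pts :: "nat \<Rightarrow> (nat \<Rightarrow> bit) set" where
  "pts n = {v \<in> vecs n. v \<noteq> (\<lambda>_. 0)}"

definition vadd :: "(nat \<Rightarrow> bit) \<Rightarrow> (nat \<Rightarrow> bit) \<Rightarrow> (nat \<Rightarrow> bit)" where
  "vadd u w = (\<lambda>i. u i + w i)"

definition qform :: "nat \<Rightarrow> (nat \<Rightarrow> nat \<Rightarrow> bit) \<Rightarrow> (nat \<Rightarrow> bit) \<Rightarrow> bit" where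
  "qform n a v = (\<Sum>i\<le>n. \<Sum>j\<in>{i..n}. a i j * v i * v j)"

definition polar :: "nat \<Rightarrow> (nat \<Rightarrow> nat \<Rightarrow> bit) \<Rightarrow> (nat \<Rightarrow> bit) \<Rightarrow> (nat \<Rightarrow> bit) \<Rightarrow> bit" where
  "polar n a u w = qform n a (vadd u w) + qform n a u + qform n a w"

definition nonsingular :: "nat \<Rightarrow> (nat \<Rightarrow> nat \<Rightarrow> bit) \<Rightarrow> bool" where
  "nonsingular n a \<longleftrightarrow>
     \<not> (\<exists>v\<in>pts n. qform n a v = 0 \<and> (\<forall>w\<in>vecs n. polar n a v w = 0))"

definition quadric :: "nat \<Rightarrow> (nat \<Rightarrow> nat \<Rightarrow> bit) \<Rightarrow> (nat \<Rightarrow> bit) set" where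
  "quadric n a = {v \<in> pts n. qform n a v = 0}"

text \<open>Projective subspace of PG(n,2) of (projective) dimension k: the nonzero
  vectors of a (k+1)-dimensional linear subspace; over GF(2) this is a set of
  points closed under sums of distinct elements, of size 2^(k+1)-1.\<close>

definition proj_subspace :: "nat \<Rightarrow> (nat \<Rightarrow> bit) set \<Rightarrow> nat \<Rightarrow> bool" where
  "proj_subspace n S k \<longleftrightarrow> S \<subseteq> pts n \<and>
     (\<forall>x\<in>S. \<forall>y\<in>S. x \<noteq> y \<longrightarrow> vadd x y \<in> S) \<and> card S = 2^(k+1) - 1"

definition proj_index :: "nat \<Rightarrow> (nat \<Rightarrow> nat \<Rightarrow> bit) \<Rightarrow> nat" where
  "proj_index n a = (GREATEST k. \<exists>S. proj_subspace n S k \<and> S \<subseteq> quadric n a)"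

text \<open>Adjacency in the point graph Gamma: distinct points whose joining line
  {P, R, P+R} lies on the quadric.\<close>

definition adj :: "nat \<Rightarrow> (nat \<Rightarrow> nat \<Rightarrow> bit) \<Rightarrow> (nat \<Rightarrow> bit) \<Rightarrow> (nat \<Rightarrow> bit) \<Rightarrow> bool" where
  "adj n a P R \<longleftrightarrow> P \<in> quadric n a \<and> R \<in> quadric n a \<and> P \<noteq> R \<and>
     {P, R, vadd P R} \<subseteq> quadric n a"

definition span_pt :: "(nat \<Rightarrow> bit) set \<Rightarrow> (nat \<Rightarrow> bit) \<Rightarrow> (nat \<Rightarrow> bit) set" where
  "span_pt A X = A \<union> {X} \<union> (\<lambda>b. vadd b X) ` A"

text \<open>Type (ii) points X_s, and Y_s = points of type (i) or (iii).\<close>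

definition Xs :: "nat \<Rightarrow> (nat \<Rightarrow> nat \<Rightarrow> bit) \<Rightarrow> (nat \<Rightarrow> bit) set \<Rightarrow> (nat \<Rightarrow> bit) set" where
  "Xs n a A = {X \<in> quadric n a. X \<notin> A \<and> span_pt A X \<subseteq> quadric n a}"

definition Ys :: "nat \<Rightarrow> (nat \<Rightarrow> nat \<Rightarrow> bit) \<Rightarrow> (nat \<Rightarrow> bit) set \<Rightarrow> (nat \<Rightarrow> bit) set" where
  "Ys n a A = quadric n a - Xs n a A"

definition switched :: "nat \<Rightarrow> (nat \<Rightarrow> nat \<Rightarrow> bit) \<Rightarrow> (nat \<Rightarrow> bit) set \<Rightarrow> (nat \<Rightarrow> bit) \<Rightarrow> bool" where
  "switched n a A R \<longleftrightarrow> R \<in> Ys n a A \<and>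
     2 * card {X \<in> Xs n a A. adj n a R X} = card (Xs n a A)"

definition adj_s :: "nat \<Rightarrow> (nat \<Rightarrow> nat \<Rightarrow> bit) \<Rightarrow> (nat \<Rightarrow> bit) set \<Rightarrow> (nat \<Rightarrow> bit) \<Rightarrow> (nat \<Rightarrow> bit) \<Rightarrow> bool" where
  "adj_s n a A P R \<longleftrightarrow> P \<in> quadric n a \<and> R \<in> quadric n a \<and> P \<noteq> R \<and>
     (if (switched n a A P \<and> R \<in> Xs n a A) \<or> (switched n a A R \<and> P \<in> Xs n a A)
      then \<not> adj n a P R else adj n a P R)"

definition clique_s :: "nat \<Rightarrow> (nat \<Rightarrow> nat \<Rightarrow> bit) \<Rightarrow> (nat \<Rightarrow> bit) set \<Rightarrow> (nat \<Rightarrow> bit) set \<Rightarrow> bool" where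
  "clique_s n a A C \<longleftrightarrow> C \<subseteq> quadric n a \<and>
     (\<forall>P\<in>C. \<forall>R\<in>C. P \<noteq> R \<longrightarrow> adj_s n a A P R)"

end

theory Submission
  imports Defs
begin

declare add_bit_eq_xor[simp del] mult_bit_eq_and[simp del]

lemma bit_add_self[simp]: "(x::bit) + x = 0" by (cases x) simp_all

lemma bit_cases2: "(x::bit) = 0 \<or> x = 1" by (cases x) simp_all

definition zv :: "nat \<Rightarrow> bit" where "zv = (\<lambda>_. 0)"

definition Bf :: "nat \<Rightarrow> (nat \<Rightarrow> nat \<Rightarrow> bit) \<Rightarrow> (nat \<Rightarrow> bit) \<Rightarrow> (nat \<Rightarrow> bit) \<Rightarrow> bit" where
  "Bf n a u w = (\<Sum>i\<le>n. \<Sum>j\<in>{i..n}. a i j * (u i * w j + w i * u j))"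

lemma qform_vadd: "qform n a (vadd u w) = qform n a u + qform n a w + Bf n a u w"
proof -
  have "qform n a (vadd u w) = (\<Sum>i\<le>n. \<Sum>j\<in>{i..n}. a i j * u i * u j + a i j * w i * w j + a i j * (u i * w j + w i * u j))"
    unfolding qform_def vadd_def by (intro sum.cong refl) (simp add: algebra_simps)
  also have "\<dots> = qform n a u + qform n a w + Bf n a u w"
    unfolding qform_def Bf_def by (simp add: sum.distrib)
  finally show ?thesis .
qed

lemma polar_eq: "polar n a u w = Bf n a u w"
  unfolding polar_def qform_vadd by (simp add: algebra_simps)

lemma Bf_sym: "Bf n a u w = Bf n a w u"
  unfolding Bf_def by (simp add: algebra_simps)

lemma Bf_self[simp]: "Bf n a u u = 0"
  unfolding Bf_def by (simp add: algebra_simps)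

lemma Bf_add1: "Bf n a (vadd u v) w = Bf n a u w + Bf n a v w"
  unfolding Bf_def vadd_def by (simp add: algebra_simps sum.distrib)

lemma Bf_add2: "Bf n a w (vadd u v) = Bf n a w u + Bf n a w v"
  unfolding Bf_def vadd_def by (simp add: algebra_simps sum.distrib)

lemma Bf_zv1[simp]: "Bf n a zv w = 0" and Bf_zv2[simp]: "Bf n a w zv = 0"
  unfolding Bf_def zv_def by simp_all

lemma qform_zv[simp]: "qform n a zv = 0"
  unfolding qform_def zv_def by simp

lemma vadd_self[simp]: "vadd x x = zv" unfolding vadd_def zv_def by simp
lemma vadd_comm: "vadd x y = vadd y x" unfolding vadd_def by (simp add: add.commute)
lemma vadd_assoc: "vadd (vadd x y) z = vadd x (vadd y z)" unfolding vadd_def by (simp add: add.assoc)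
lemma vadd_zv[simp]: "vadd x zv = x" "vadd zv x = x" unfolding vadd_def zv_def by simp_all
lemma vadd_cancel[simp]: "vadd x (vadd x y) = y" "vadd (vadd y x) x = y"
  by (simp_all only: vadd_assoc[symmetric] vadd_self vadd_zv) (simp_all only: vadd_assoc vadd_self vadd_zv)
lemma vadd_eq_zv: "vadd x y = zv \<longleftrightarrow> x = y"
proof
  assume "vadd x y = zv" then have "vadd x (vadd x y) = vadd x zv" by simp
  then show "x = y" by simp
qed simp
lemma vadd_inj: "vadd x y = vadd x w \<longleftrightarrow> y = w"
  by (metis vadd_cancel(1))
lemma vadd_inj2: "vadd y x = vadd w x \<longleftrightarrow> y = w"
  by (metis vadd_cancel(2))

lemma vecs_vadd: "u \<in> vecs n \<Longrightarrow> w \<in> vecs n \<Longrightarrow> vadd u w \<in> vecs n"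
  unfolding vecs_def vadd_def by simp
lemma zv_vecs[simp]: "zv \<in> vecs n" unfolding vecs_def zv_def by simp

lemma pts_iff: "v \<in> pts n \<longleftrightarrow> v \<in> vecs n \<and> v \<noteq> zv"
  unfolding pts_def zv_def by simp

lemma finite_vecs: "finite (vecs n)"
proof -
  have "vecs n \<subseteq> (\<lambda>xs i. if i \<le> n then xs ! i else 0) ` {xs :: bit list. set xs \<subseteq> UNIV \<and> length xs = Suc n}"
  proof
    fix v assume v: "v \<in> vecs n"
    have "v = (\<lambda>i. if i \<le> n then map v [0..<Suc n] ! i else 0)"
      using v unfolding vecs_def by (auto simp: fun_eq_iff simp del: upt_Suc)
    then show "v \<in> (\<lambda>xs i. if i \<le> n then xs ! i else 0) ` {xs :: bit list. set xs \<subseteq> UNIV \<and> length xs = Suc n}"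
      by (intro image_eqI[where x="map v [0..<Suc n]"]) auto
  qed
  moreover have "finite {xs :: bit list. set xs \<subseteq> UNIV \<and> length xs = Suc n}"
  proof (rule finite_lists_length_eq)
    have "(UNIV :: bit set) = {0, 1}" using bit_cases2 by blast
    then show "finite (UNIV :: bit set)" by (metis finite.emptyI finite.insertI)
  qed
  ultimately show ?thesis by (rule finite_subset[OF _ finite_imageI])
qed

definition subgrp :: "(nat \<Rightarrow> bit) set \<Rightarrow> bool" where
  "subgrp S \<longleftrightarrow> zv \<in> S \<and> (\<forall>x\<in>S. \<forall>y\<in>S. vadd x y \<in> S)"

lemma card_subgrp_pow2:
  assumes "finite S" "subgrp S" shows "\<exists>k. card S = 2^k"
  using assms
proof (induction "card S" arbitrary: S rule: less_induct)
  case less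
  show ?case
  proof (cases "S = {zv}")
    case True then show ?thesis by (intro exI[of _ 0]) simp
  next
    case False
    with less.prems obtain v where v: "v \<in> S" "v \<noteq> zv" unfolding subgrp_def by blast
    then obtain i where i: "v i = 1" unfolding zv_def by (metis bit_not_zero_iff ext)
    define S0 where "S0 = {x\<in>S. x i = 0}"
    have fS0: "finite S0" using less.prems unfolding S0_def by simp
    have sg: "subgrp S0" using less.prems unfolding subgrp_def S0_def vadd_def zv_def by auto
    have vS0: "v \<notin> S0" using i unfolding S0_def by simp
    have sub: "S0 \<subseteq> S" unfolding S0_def by auto
    have lt: "card S0 < card S" using psubset_card_mono[OF less.prems(1)] sub vS0 v by blast
    have img: "S - S0 = vadd v ` S0"
    proof
      show "S - S0 \<subseteq> vadd v ` S0"
      proof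
        fix x assume x: "x \<in> S - S0"
        then have "x i = 1" unfolding S0_def by simp
        then have "vadd v x \<in> S0" using x v i less.prems(2) unfolding S0_def subgrp_def vadd_def by auto
        then show "x \<in> vadd v ` S0" by (intro image_eqI[where x="vadd v x"]) simp_all
      qed
      show "vadd v ` S0 \<subseteq> S - S0"
        using v i less.prems(2) unfolding S0_def subgrp_def vadd_def by auto
    qed
    have "card (vadd v ` S0) = card S0" by (rule card_image) (auto simp: inj_on_def vadd_inj)
    then have "card S = 2 * card S0"
      using card_Diff_subset[OF fS0 sub] card_mono[OF less.prems(1) sub] img by simp
    moreover obtain k where "card S0 = 2^k" using less.hyps[OF lt fS0 sg] by blast
    ultimately show ?thesis by (intro exI[of _ "Suc k"]) simp
  qed
qed

definition TS :: "nat \<Rightarrow> (nat \<Rightarrow> nat \<Rightarrow> bit) \<Rightarrow> (nat \<Rightarrow> bit) set \<Rightarrow> bool" where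
  "TS n a S \<longleftrightarrow> subgrp S \<and> S \<subseteq> vecs n \<and> (\<forall>x\<in>S. qform n a x = 0)"

lemma TS_orth: "TS n a S \<Longrightarrow> x \<in> S \<Longrightarrow> y \<in> S \<Longrightarrow> Bf n a x y = 0"
  unfolding TS_def subgrp_def using qform_vadd[of n a x y] by force

lemma span_lemma:
  assumes "finite D" "D \<subseteq> vecs n" "\<forall>x\<in>D. qform n a x = 0" "\<forall>x\<in>D. \<forall>y\<in>D. Bf n a x y = 0"
  shows "\<exists>S. TS n a S \<and> D \<subseteq> S \<and> (\<forall>s\<in>S. \<forall>y. (\<forall>d\<in>D. Bf n a d y = 0) \<longrightarrow> Bf n a s y = 0)"
  using assms
proof (induction D rule: finite_induct)
  case empty
  show ?case by (intro exI[of _ "{zv}"]) (auto simp: TS_def subgrp_def)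
next
  case (insert x D)
  then obtain S where S: "TS n a S" "D \<subseteq> S" "\<forall>s\<in>S. \<forall>y. (\<forall>d\<in>D. Bf n a d y = 0) \<longrightarrow> Bf n a s y = 0"
    by auto
  have xo: "\<forall>s\<in>S. Bf n a s x = 0" using S(3) insert.prems by (auto simp: Bf_sym)
  define S' where "S' = S \<union> vadd x ` S"
  have sS: "subgrp S" using S(1) unfolding TS_def by simp
  have "subgrp S'"
    unfolding subgrp_def
  proof (intro conjI ballI)
    show "zv \<in> S'" using sS unfolding S'_def subgrp_def by simp
    fix u w assume u: "u \<in> S'" and w: "w \<in> S'"
    show "vadd u w \<in> S'"
    proof (cases "u \<in> S")
      case True
      show ?thesis
      proof (cases "w \<in> S")
        case True with \<open>u \<in> S\<close> sS show ?thesis unfolding S'_def subgrp_def by simp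
      next
        case False
        then obtain w' where "w' \<in> S" "w = vadd x w'" using w unfolding S'_def by auto
        then have "vadd u w = vadd x (vadd u w')" by (metis vadd_assoc vadd_comm)
        then show ?thesis using \<open>u \<in> S\<close> \<open>w' \<in> S\<close> sS unfolding S'_def subgrp_def by blast
      qed
    next
      case False
      then obtain u' where u': "u' \<in> S" "u = vadd x u'" using u unfolding S'_def by auto
      show ?thesis
      proof (cases "w \<in> S")
        case True
        have "vadd u w = vadd x (vadd u' w)" using u' by (simp add: vadd_assoc)
        then show ?thesis using True u' sS unfolding S'_def subgrp_def by blast
      next
        case False
        then obtain w' where "w' \<in> S" "w = vadd x w'" using w unfolding S'_def by auto
        then have "vadd u w = vadd u' w'" using u' by (metis vadd_assoc vadd_comm vadd_cancel(1))
        then show ?thesis using \<open>w' \<in> S\<close> u' sS unfolding S'_def subgrp_def by simp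
      qed
    qed
  qed
  moreover have "S' \<subseteq> vecs n" using S(1) insert.prems unfolding S'_def TS_def by (auto intro: vecs_vadd)
  moreover have "\<forall>y\<in>S'. qform n a y = 0"
    using S(1) insert.prems xo unfolding S'_def TS_def by (auto simp: qform_vadd Bf_sym)
  moreover have "insert x D \<subseteq> S'"
    using S(1,2) unfolding S'_def TS_def subgrp_def by (auto intro: image_eqI[where x=zv])
  moreover have "\<forall>s\<in>S'. \<forall>y. (\<forall>d\<in>insert x D. Bf n a d y = 0) \<longrightarrow> Bf n a s y = 0"
    using S(3) unfolding S'_def by (auto simp: Bf_add1)
  ultimately show ?case unfolding TS_def by blast
qed

lemma proj_index_bound:
  assumes "proj_subspace n S k" shows "k < card (vecs n)"
proof -
  have "S \<subseteq> vecs n" using assms unfolding proj_subspace_def pts_def by auto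
  then have "card S \<le> card (vecs n)" by (rule card_mono[OF finite_vecs])
  moreover have "Suc k < 2 ^ Suc k" by (rule less_exp)
  ultimately show ?thesis using assms unfolding proj_subspace_def by simp
qed

lemma le_proj_index:
  assumes "proj_subspace n S k" "S \<subseteq> quadric n a" shows "k \<le> proj_index n a"
  unfolding proj_index_def
  by (rule Greatest_le_nat[where b="card (vecs n)"]) (use assms proj_index_bound in \<open>auto simp: less_imp_le\<close>)

lemma proj_index_ex:
  assumes "proj_subspace n S k" "S \<subseteq> quadric n a"
  shows "\<exists>M. proj_subspace n M (proj_index n a) \<and> M \<subseteq> quadric n a"
  unfolding proj_index_def
  by (rule GreatestI_nat[where k=k and b="card (vecs n)"]) (use assms proj_index_bound in \<open>auto simp: less_imp_le\<close>)

lemma TS_card_bound: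
  assumes "TS n a S" shows "card S \<le> 2 ^ (proj_index n a + 1)"
proof -
  have fS: "finite S" using assms finite_vecs unfolding TS_def by (auto intro: finite_subset)
  obtain k where k: "card S = 2 ^ k" using card_subgrp_pow2[OF fS] assms unfolding TS_def by blast
  show ?thesis
  proof (cases k)
    case 0 then show ?thesis using k by simp
  next
    case (Suc m)
    have z: "zv \<in> S" using assms unfolding TS_def subgrp_def by auto
    have "proj_subspace n (S - {zv}) m"
      unfolding proj_subspace_def
    proof (intro conjI ballI impI)
      show "S - {zv} \<subseteq> pts n" using assms unfolding TS_def by (auto simp: pts_iff)
      fix x y assume "x \<in> S - {zv}" "y \<in> S - {zv}" "x \<noteq> y"
      then show "vadd x y \<in> S - {zv}" using assms unfolding TS_def subgrp_def by (auto simp: vadd_eq_zv)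
    next
      show "card (S - {zv}) = 2 ^ (m + 1) - 1" using k Suc z fS by simp
    qed
    moreover have "S - {zv} \<subseteq> quadric n a" using assms unfolding TS_def quadric_def pts_iff by auto
    ultimately have "m \<le> proj_index n a" by (rule le_proj_index)
    then show ?thesis using k Suc by (simp add: power_increasing)
  qed
qed

lemma clique_bound:
  assumes "D \<subseteq> quadric n a" "\<forall>x\<in>D. \<forall>y\<in>D. x \<noteq> y \<longrightarrow> Bf n a x y = 0"
  shows "card D \<le> 2 ^ (proj_index n a + 1) - 1"
proof -
  have Dv: "D \<subseteq> vecs n" using assms(1) unfolding quadric_def pts_def by auto
  have fD: "finite D" using Dv finite_vecs by (auto intro: finite_subset)
  have "\<forall>x\<in>D. \<forall>y\<in>D. Bf n a x y = 0" using assms(2) by (metis Bf_self)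
  moreover have "\<forall>x\<in>D. qform n a x = 0" using assms(1) unfolding quadric_def by auto
  ultimately obtain S where S: "TS n a S" "D \<subseteq> S" using span_lemma[OF fD Dv] by blast
  have fS: "finite S" using S(1) finite_vecs unfolding TS_def by (auto intro: finite_subset)
  have "D \<subseteq> S - {zv}" using S(2) assms(1) unfolding quadric_def pts_iff by auto
  then have "card D \<le> card (S - {zv})" using fS by (intro card_mono) auto
  also have "\<dots> = card S - 1" using S(1) fS unfolding TS_def subgrp_def by simp
  finally show ?thesis using TS_card_bound[OF S(1)] by linarith
qed

lemma TS_insert:
  assumes S: "TS n a S" and x: "x \<in> vecs n" "qform n a x = 0" and xo: "\<forall>s\<in>S. Bf n a s x = 0"
  shows "TS n a (S \<union> vadd x ` S)" "insert x S \<subseteq> S \<union> vadd x ` S"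
proof -
  define S' where "S' = S \<union> vadd x ` S"
  have sS: "subgrp S" using S unfolding TS_def by simp
  have "subgrp S'"
    unfolding subgrp_def
  proof (intro conjI ballI)
    show "zv \<in> S'" using sS unfolding S'_def subgrp_def by simp
    fix u w assume u: "u \<in> S'" and w: "w \<in> S'"
    show "vadd u w \<in> S'"
    proof (cases "u \<in> S")
      case True
      show ?thesis
      proof (cases "w \<in> S")
        case True with \<open>u \<in> S\<close> sS show ?thesis unfolding S'_def subgrp_def by simp
      next
        case False
        then obtain w' where "w' \<in> S" "w = vadd x w'" using w unfolding S'_def by auto
        then have "vadd u w = vadd x (vadd u w')" by (metis vadd_assoc vadd_comm)
        then show ?thesis using \<open>u \<in> S\<close> \<open>w' \<in> S\<close> sS unfolding S'_def subgrp_def by blast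
      qed
    next
      case False
      then obtain u' where u': "u' \<in> S" "u = vadd x u'" using u unfolding S'_def by auto
      show ?thesis
      proof (cases "w \<in> S")
        case True
        have "vadd u w = vadd x (vadd u' w)" using u' by (simp add: vadd_assoc)
        then show ?thesis using True u' sS unfolding S'_def subgrp_def by blast
      next
        case False
        then obtain w' where "w' \<in> S" "w = vadd x w'" using w unfolding S'_def by auto
        then have "vadd u w = vadd u' w'" using u' by (metis vadd_assoc vadd_comm vadd_cancel(1))
        then show ?thesis using \<open>w' \<in> S\<close> u' sS unfolding S'_def subgrp_def by simp
      qed
    qed
  qed
  moreover have "S' \<subseteq> vecs n" using S x unfolding S'_def TS_def by (auto intro: vecs_vadd)
  moreover have "\<forall>y\<in>S'. qform n a y = 0"
    using S x xo unfolding S'_def TS_def by (auto simp: qform_vadd Bf_sym)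
  ultimately show "TS n a (S \<union> vadd x ` S)" unfolding TS_def S'_def by blast
  show "insert x S \<subseteq> S \<union> vadd x ` S"
    using sS unfolding subgrp_def by (auto intro: image_eqI[where x=zv])
qed

lemma TS_finite: "TS n a S \<Longrightarrow> finite S"
  using finite_vecs unfolding TS_def by (auto intro: finite_subset)

lemma extend_lemma:
  assumes M: "TS n a M" and F: "finite F" "F \<subseteq> vecs n" "\<forall>x\<in>F. qform n a x = 0" "\<forall>x\<in>F. \<forall>y\<in>F. Bf n a x y = 0"
  shows "\<exists>M'. TS n a M' \<and> F \<subseteq> M' \<and> card M \<le> card M'"
  using F
proof (induction F rule: finite_induct)
  case empty then show ?case using M by blast
next
  case (insert x F)
  then obtain M1 where M1: "TS n a M1" "F \<subseteq> M1" "card M \<le> card M1" by auto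
  have xv: "x \<in> vecs n" "qform n a x = 0" using insert.prems by auto
  have fM1: "finite M1" using TS_finite[OF M1(1)] .
  show ?case
  proof (cases "x \<in> M1")
    case True then show ?thesis using M1 by blast
  next
    case xn: False
    show ?thesis
    proof (cases "\<forall>s\<in>M1. Bf n a s x = 0")
      case True
      note TI = TS_insert[OF M1(1) xv True]
      have "card M1 \<le> card (M1 \<union> vadd x ` M1)" using fM1 by (intro card_mono) auto
      then show ?thesis using TI M1 by (intro exI[of _ "M1 \<union> vadd x ` M1"]) auto
    next
      case False
      then obtain m0 where m0: "m0 \<in> M1" "Bf n a m0 x = 1" by auto
      define M0 where "M0 = {s\<in>M1. Bf n a s x = 0}"
      have sM1: "subgrp M1" using M1(1) unfolding TS_def by simp
      have TS0: "TS n a M0" using M1(1) unfolding TS_def M0_def subgrp_def by (auto simp: Bf_add1)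
      have F0: "F \<subseteq> M0" using M1(2) insert.prems unfolding M0_def by auto
      have fM0: "finite M0" using fM1 unfolding M0_def by simp
      have sub: "M0 \<subseteq> M1" unfolding M0_def by auto
      have img: "M1 - M0 = vadd m0 ` M0"
      proof
        show "M1 - M0 \<subseteq> vadd m0 ` M0"
        proof
          fix y assume y: "y \<in> M1 - M0"
          then have "Bf n a y x = 1" unfolding M0_def by simp
          then have "vadd m0 y \<in> M0" using y m0 sM1 unfolding M0_def subgrp_def by (auto simp: Bf_add1)
          then show "y \<in> vadd m0 ` M0" by (intro image_eqI[where x="vadd m0 y"]) simp_all
        qed
        show "vadd m0 ` M0 \<subseteq> M1 - M0"
          using m0 sM1 unfolding M0_def subgrp_def by (auto simp: Bf_add1)
      qed
      have "card (vadd m0 ` M0) = card M0" by (rule card_image) (auto simp: inj_on_def vadd_inj)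
      then have c1: "card M1 = 2 * card M0"
        using card_Diff_subset[OF fM0 sub] card_mono[OF fM1 sub] img by simp
      have xo: "\<forall>s\<in>M0. Bf n a s x = 0" unfolding M0_def by auto
      note TI = TS_insert[OF TS0 xv xo]
      have disj: "M0 \<inter> vadd x ` M0 = {}"
      proof (rule ccontr)
        assume "M0 \<inter> vadd x ` M0 \<noteq> {}"
        then obtain s s' where "s \<in> M0" "s' \<in> M0" "vadd x s = s'" by auto
        then have "x = vadd s' s" by (metis vadd_cancel(2) vadd_comm)
        then have "x \<in> M1" using \<open>s \<in> M0\<close> \<open>s' \<in> M0\<close> sub sM1 unfolding subgrp_def by blast
        then show False using xn by simp
      qed
      have "card (vadd x ` M0) = card M0" by (rule card_image) (auto simp: inj_on_def vadd_inj)
      then have "card (M0 \<union> vadd x ` M0) = card M1"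
        using card_Un_disjoint[OF fM0 finite_imageI[OF fM0] disj] c1 by simp
      then show ?thesis using TI F0 M1(3) by (intro exI[of _ "M0 \<union> vadd x ` M0"]) auto
    qed
  qed
qed

lemma dich:
  assumes Az: "subgrp Az" and W: "subgrp W" and psi: "\<forall>x y. \<psi> (vadd x y) = \<psi> x + \<psi> y"
    and L: "set L \<subseteq> W"
  shows "(\<exists>b\<in>Az. \<forall>x\<in>set L. Bf n a x b = \<psi> x) \<or> (\<exists>r\<in>W. (\<forall>b\<in>Az. Bf n a r b = 0) \<and> \<psi> r = 1)"
  using L
proof (induction "length L" arbitrary: L rule: less_induct)
  case less
  show ?case
  proof (cases L)
    case Nil then show ?thesis using Az unfolding subgrp_def by auto
  next
    case (Cons R1 L')
    have R1W: "R1 \<in> W" and L'W: "set L' \<subseteq> W" using less.prems Cons by auto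
    show ?thesis
    proof (cases "\<forall>b\<in>Az. Bf n a R1 b = 0")
      case True
      show ?thesis
      proof (cases "\<psi> R1 = 1")
        case True2: True
        then show ?thesis using True R1W by blast
      next
        case False
        then have p0: "\<psi> R1 = 0" by simp
        from less.hyps[of L'] Cons L'W
        have "(\<exists>b\<in>Az. \<forall>x\<in>set L'. Bf n a x b = \<psi> x) \<or> (\<exists>r\<in>W. (\<forall>b\<in>Az. Bf n a r b = 0) \<and> \<psi> r = 1)"
          by simp
        then show ?thesis using True p0 Cons by auto
      qed
    next
      case False
      then obtain a1 where a1: "a1 \<in> Az" "Bf n a R1 a1 = 1" by auto
      define L'' where "L'' = map (\<lambda>R. if Bf n a R a1 = 1 then vadd R R1 else R) L'"
      have L''W: "set L'' \<subseteq> W" using L'W R1W W unfolding L''_def subgrp_def by auto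
      from less.hyps[of L''] Cons L''W
      have "(\<exists>b\<in>Az. \<forall>x\<in>set L''. Bf n a x b = \<psi> x) \<or> (\<exists>r\<in>W. (\<forall>b\<in>Az. Bf n a r b = 0) \<and> \<psi> r = 1)"
        unfolding L''_def by simp
      then show ?thesis
      proof
        assume "\<exists>b\<in>Az. \<forall>x\<in>set L''. Bf n a x b = \<psi> x"
        then obtain b where b: "b \<in> Az" "\<forall>x\<in>set L''. Bf n a x b = \<psi> x" by blast
        define c where "c = \<psi> R1 + Bf n a R1 b"
        define b' where "b' = (if c = 1 then vadd b a1 else b)"
        have b'A: "b' \<in> Az" using b(1) a1(1) Az unfolding b'_def subgrp_def by auto
        have gen: "Bf n a x b' = Bf n a x b + c * Bf n a x a1" for x
          unfolding b'_def using bit_cases2[of c] by (auto simp: Bf_add2)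
        have "\<forall>x\<in>set L. Bf n a x b' = \<psi> x"
        proof
          fix x assume "x \<in> set L"
          then consider "x = R1" | "x \<in> set L'" using Cons by auto
          then show "Bf n a x b' = \<psi> x"
          proof cases
            case 1 then show ?thesis using gen[of R1] a1(2) unfolding c_def by (simp add: add.assoc)
          next
            case 2
            show ?thesis
            proof (cases "Bf n a x a1 = 1")
              case True
              then have "vadd x R1 \<in> set L''" using 2 unfolding L''_def by force
              then have "Bf n a (vadd x R1) b = \<psi> (vadd x R1)" using b(2) by blast
              then have "Bf n a x b + Bf n a R1 b = \<psi> x + \<psi> R1" using psi by (simp add: Bf_add1)
              then have "Bf n a x b = \<psi> x + c" unfolding c_def
                by (metis add.assoc add.commute add_0_right bit_add_self)
              then show ?thesis using gen[of x] True by (simp add: add.assoc)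
            next
              case False
              then have "x \<in> set L''" using 2 unfolding L''_def by force
              then show ?thesis using gen[of x] False b(2) by simp
            qed
          qed
        qed
        then show ?thesis using b'A by blast
      qed blast
    qed
  qed
qed

lemma quadric_iff: "x \<in> quadric n a \<longleftrightarrow> x \<in> vecs n \<and> x \<noteq> zv \<and> qform n a x = 0"
  unfolding quadric_def pts_iff by auto

lemma adj_iff:
  assumes "P \<in> quadric n a" "R \<in> quadric n a"
  shows "adj n a P R \<longleftrightarrow> P \<noteq> R \<and> Bf n a P R = 0"
  using assms unfolding adj_def
  by (auto simp: quadric_iff qform_vadd vecs_vadd vadd_eq_zv)

context
  fixes n a A s
  assumes Asub: "proj_subspace n A s" and Aq: "A \<subseteq> quadric n a"
begin

lemma Aq': "x \<in> A \<Longrightarrow> x \<in> vecs n \<and> x \<noteq> zv \<and> qform n a x = 0"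
  using Aq by (auto simp: quadric_iff)

lemma Az_TS: "TS n a (A \<union> {zv})"
proof -
  have "vadd x y \<in> A \<union> {zv}" if "x \<in> A \<union> {zv}" "y \<in> A \<union> {zv}" for x y
    using that Asub unfolding proj_subspace_def by (cases "x = y") auto
  moreover have "A \<union> {zv} \<subseteq> vecs n" using Aq' by auto
  moreover have "\<forall>x\<in>A \<union> {zv}. qform n a x = 0" using Aq' by auto
  ultimately show ?thesis unfolding TS_def subgrp_def by auto
qed

lemma A_orth: "x \<in> A \<union> {zv} \<Longrightarrow> y \<in> A \<union> {zv} \<Longrightarrow> Bf n a x y = 0"
  using TS_orth[OF Az_TS] by blast

lemma Xs_iff: "X \<in> Xs n a A \<longleftrightarrow> X \<in> quadric n a \<and> X \<notin> A \<and> (\<forall>b\<in>A. Bf n a b X = 0)"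
proof
  assume X: "X \<in> Xs n a A"
  then have XQ: "X \<in> quadric n a" "X \<notin> A" "span_pt A X \<subseteq> quadric n a" unfolding Xs_def by auto
  have "Bf n a b X = 0" if b: "b \<in> A" for b
  proof -
    have "vadd b X \<in> quadric n a" using XQ(3) b unfolding span_pt_def by auto
    then show ?thesis using XQ(1) Aq'[OF b] by (auto simp: qform_vadd quadric_iff)
  qed
  then show "X \<in> quadric n a \<and> X \<notin> A \<and> (\<forall>b\<in>A. Bf n a b X = 0)" using XQ by auto
next
  assume X: "X \<in> quadric n a \<and> X \<notin> A \<and> (\<forall>b\<in>A. Bf n a b X = 0)"
  have "vadd b X \<in> quadric n a" if b: "b \<in> A" for b
  proof -
    have "b \<noteq> X" using X b by auto
    then show ?thesis using X Aq'[OF b] b by (auto simp: quadric_iff qform_vadd vecs_vadd vadd_eq_zv)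
  qed
  then show "X \<in> Xs n a A" using X Aq unfolding Xs_def span_pt_def by auto
qed

lemma not_Xs_wit:
  assumes "R \<in> quadric n a" "R \<notin> A" "R \<notin> Xs n a A"
  shows "\<exists>b\<in>A. Bf n a b R = 1"
  using assms Xs_iff by auto

lemma finite_Xs: "finite (Xs n a A)"
  using finite_vecs unfolding Xs_def quadric_def pts_def by (auto intro: finite_subset)

lemma switched_iff:
  assumes R: "R \<in> quadric n a" and ne: "Xs n a A \<noteq> {}"
  shows "switched n a A R \<longleftrightarrow> R \<notin> A \<and> R \<notin> Xs n a A"
proof
  assume sw: "switched n a A R"
  then have nX: "R \<notin> Xs n a A" unfolding switched_def Ys_def by auto
  moreover have "R \<notin> A"
  proof
    assume RA: "R \<in> A"
    have "{X \<in> Xs n a A. adj n a R X} = Xs n a A"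
      using RA R nX by (auto simp: adj_iff Xs_iff)
    then have "2 * card (Xs n a A) = card (Xs n a A)" using sw unfolding switched_def by simp
    then have "card (Xs n a A) = 0" by simp
    then show False using ne finite_Xs by simp
  qed
  ultimately show "R \<notin> A \<and> R \<notin> Xs n a A" by simp
next
  assume RR: "R \<notin> A \<and> R \<notin> Xs n a A"
  then obtain b where b: "b \<in> A" "Bf n a b R = 1" using not_Xs_wit R by blast
  define N0 where "N0 = {X \<in> Xs n a A. Bf n a R X = 0}"
  define N1 where "N1 = {X \<in> Xs n a A. Bf n a R X = 1}"
  have N: "{X \<in> Xs n a A. adj n a R X} = N0"
    unfolding N0_def using RR R by (auto simp: adj_iff Xs_def)
  have un: "Xs n a A = N0 \<union> N1" and dj: "N0 \<inter> N1 = {}"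
    unfolding N0_def N1_def using bit_cases2 by auto
  have fin: "finite N0" "finite N1" using finite_Xs un by auto
  have bX: "vadd X b \<in> Xs n a A" if X: "X \<in> Xs n a A" for X
  proof -
    have XX: "X \<in> quadric n a" "X \<notin> A" "\<forall>c\<in>A. Bf n a c X = 0" using X Xs_iff by auto
    have "X \<noteq> b" using XX b by auto
    then have q: "vadd X b \<in> quadric n a"
      using XX Aq'[OF b(1)] b(1) by (auto simp: quadric_iff qform_vadd vecs_vadd vadd_eq_zv Bf_sym)
    have "vadd X b \<notin> A"
    proof
      assume "vadd X b \<in> A"
      then have "vadd (vadd X b) b \<in> A \<union> {zv}" using Az_TS b unfolding TS_def subgrp_def by blast
      then show False using XX by (auto simp: quadric_iff)
    qed
    moreover have "\<forall>c\<in>A. Bf n a c (vadd X b) = 0" using XX b A_orth by (auto simp: Bf_add2)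
    ultimately show ?thesis using q Xs_iff by auto
  qed
  have "bij_betw (\<lambda>X. vadd X b) N0 N1"
  proof (rule bij_betw_byWitness[where f'="\<lambda>X. vadd X b"])
    show "(\<lambda>X. vadd X b) ` N0 \<subseteq> N1" using bX b unfolding N0_def N1_def by (auto simp: Bf_add2 Bf_sym)
    show "(\<lambda>X. vadd X b) ` N1 \<subseteq> N0" using bX b unfolding N0_def N1_def by (auto simp: Bf_add2 Bf_sym)
  qed auto
  then have "card N0 = card N1" by (rule bij_betw_same_card)
  then have "2 * card N0 = card (Xs n a A)" using un dj fin card_Un_disjoint by (metis mult_2)
  then show "switched n a A R" unfolding switched_def Ys_def N using R RR by auto
qed

end


lemma quadric_sub_finite: "S \<subseteq> quadric n a \<Longrightarrow> finite S"
  by (rule finite_subset[OF _ finite_vecs[of n]]) (auto simp: quadric_iff)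

lemma proj_TS:
  assumes "proj_subspace n S k" "S \<subseteq> quadric n a"
  shows "TS n a (S \<union> {zv})" "card (S \<union> {zv}) = 2 ^ (k + 1)"
proof -
  have "vadd x y \<in> S \<union> {zv}" if "x \<in> S \<union> {zv}" "y \<in> S \<union> {zv}" for x y
    using that assms(1) unfolding proj_subspace_def by (cases "x = y") auto
  moreover have "S \<union> {zv} \<subseteq> vecs n" "\<forall>x\<in>S \<union> {zv}. qform n a x = 0"
    using assms(2) by (auto simp: quadric_iff)
  ultimately show "TS n a (S \<union> {zv})" unfolding TS_def subgrp_def by auto
  have "zv \<notin> S" using assms(2) by (auto simp: quadric_iff)
  moreover have "finite S" using assms(2) by (rule quadric_sub_finite)
  ultimately show "card (S \<union> {zv}) = 2 ^ (k + 1)" using assms(1) unfolding proj_subspace_def by simp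
qed

lemma inj_clique_bound:
  assumes "inj_on f C" "f ` C \<subseteq> quadric n a" "\<forall>x\<in>C. \<forall>y\<in>C. x \<noteq> y \<longrightarrow> Bf n a (f x) (f y) = 0"
  shows "card C \<le> 2 ^ (proj_index n a + 1) - 1"
proof -
  have "card (f ` C) \<le> 2 ^ (proj_index n a + 1) - 1"
    by (rule clique_bound) (use assms in \<open>auto simp: inj_on_def\<close>)
  then show ?thesis using card_image[OF assms(1)] by simp
qed

theorem lemma5p5:
  fixes n g s :: nat and a :: "nat \<Rightarrow> nat \<Rightarrow> bit" and A :: "(nat \<Rightarrow> bit) set"
  assumes "nonsingular n a"
    and "g = proj_index n a" and "g \<ge> 1"
    and "s < g"
    and "proj_subspace n A s" and "A \<subseteq> quadric n a"
  shows "(\<exists>C. clique_s n a A C \<and> card C = 2^(g+1) - 1) \<and>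
         (\<forall>C. clique_s n a A C \<longrightarrow> card C \<le> 2^(g+1) - 1)"
proof -
  note Asub = assms(5) and Aq = assms(6)
  note Aq' = Aq'[OF Asub Aq] and Az_TS = Az_TS[OF Asub Aq] and A_orth = A_orth[OF Asub Aq]
    and Xs_iff = Xs_iff[OF Asub Aq] and not_Xs_wit = not_Xs_wit[OF Asub Aq]
    and switched_iff = switched_iff[OF Asub Aq]
  obtain M where M: "proj_subspace n M g" "M \<subseteq> quadric n a"
    using proj_index_ex[OF Asub Aq] assms(2) by blast
  note MT = proj_TS[OF M]
  have fA: "finite A" using Aq by (rule quadric_sub_finite)
  obtain M' where M': "TS n a M'" "A \<subseteq> M'" "card (M \<union> {zv}) \<le> card M'"
    using extend_lemma[OF MT(1) fA] Aq' A_orth by blast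
  define K where "K = M' - {zv}"
  have zM': "zv \<in> M'" using M'(1) unfolding TS_def subgrp_def by simp
  have fM': "finite M'" using TS_finite[OF M'(1)] .
  have KQ: "K \<subseteq> quadric n a" using M'(1) unfolding K_def TS_def by (auto simp: quadric_iff)
  have Korth: "\<forall>x\<in>K. \<forall>y\<in>K. Bf n a x y = 0" using TS_orth[OF M'(1)] unfolding K_def by blast
  have KA: "\<forall>x\<in>K. \<forall>b\<in>A. Bf n a b x = 0" using TS_orth[OF M'(1)] M'(2) unfolding K_def by blast
  have cK: "2 ^ (g + 1) - 1 \<le> card K" using M'(3) MT(2) zM' fM' unfolding K_def by simp
  have KX: "K - A \<subseteq> Xs n a A" using KQ KA Xs_iff by auto
  have cA: "card A = 2 ^ (s + 1) - 1" using Asub unfolding proj_subspace_def by simp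
  have "(2::nat) ^ (s + 1) < 2 ^ (g + 1)" using assms(4) by (intro power_strict_increasing) auto
  moreover have "(0::nat) < 2 ^ (s + 1)" by simp
  ultimately have cAK: "card A < card K" using cA cK by linarith
  have "K - A \<noteq> {}"
  proof
    assume "K - A = {}"
    then have "K \<subseteq> A" by auto
    then have "card K \<le> card A" using fA by (rule card_mono[rotated])
    then show False using cAK by simp
  qed
  then have Xne: "Xs n a A \<noteq> {}" using KX by auto
  define typ3 where "typ3 x \<longleftrightarrow> x \<notin> A \<and> x \<notin> Xs n a A" for x
  have SW: "switched n a A R \<longleftrightarrow> typ3 R" if "R \<in> quadric n a" for R
    using switched_iff[OF that Xne] unfolding typ3_def by simp
  have adjs: "adj_s n a A P R \<longleftrightarrow> P \<noteq> R \<and> Bf n a P R =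
      (if (typ3 P \<and> R \<in> Xs n a A) \<or> (typ3 R \<and> P \<in> Xs n a A) then 1 else 0)"
    if "P \<in> quadric n a" "R \<in> quadric n a" for P R
    using that unfolding adj_s_def by (auto simp: SW adj_iff)
  have Xq: "x \<in> Xs n a A \<Longrightarrow> x \<in> quadric n a" for x using Xs_iff by auto
  show ?thesis
  proof
    have "clique_s n a A K"
      unfolding clique_s_def
    proof (intro conjI ballI impI)
      show "K \<subseteq> quadric n a" by (rule KQ)
      fix P R assume PR: "P \<in> K" "R \<in> K" "P \<noteq> R"
      have "\<not> typ3 P" "\<not> typ3 R" using PR KX unfolding typ3_def by auto
      then show "adj_s n a A P R" using PR KQ Korth by (subst adjs) auto
    qed
    moreover obtain C where C: "C \<subseteq> K" "card C = 2 ^ (g + 1) - 1"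
      using obtain_subset_with_card_n[OF cK] by blast
    ultimately have "clique_s n a A C"
      unfolding clique_s_def by (meson subset_trans subsetD)
    then show "\<exists>C. clique_s n a A C \<and> card C = 2^(g+1) - 1"
      using C(2) by blast
  next
    show "\<forall>C. clique_s n a A C \<longrightarrow> card C \<le> 2^(g+1) - 1"
    proof (intro allI impI)
      fix C assume cl: "clique_s n a A C"
      have CQ: "C \<subseteq> quadric n a" using cl unfolding clique_s_def by simp
      have key: "Bf n a x y = (if (typ3 x \<and> y \<in> Xs n a A) \<or> (typ3 y \<and> x \<in> Xs n a A) then 1 else 0)"
        if "x \<in> C" "y \<in> C" for x y
      proof (cases "x = y")
        case True then show ?thesis unfolding typ3_def by simp
      next
        case False
        then have "adj_s n a A x y" using cl that unfolding clique_s_def by blast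
        then show ?thesis using adjs that CQ by blast
      qed
      show "card C \<le> 2^(g+1) - 1"
      proof (cases "(\<exists>x\<in>C. typ3 x) \<and> (\<exists>y\<in>C. y \<in> Xs n a A)")
        case False
        have "inj_on id C" by simp
        moreover have "\<forall>x\<in>C. \<forall>y\<in>C. x \<noteq> y \<longrightarrow> Bf n a (id x) (id y) = 0"
          using key False by auto
        ultimately show ?thesis using inj_clique_bound[of id C n a] CQ assms(2) by simp
      next
        case True
        then obtain X0 where X0: "X0 \<in> C" "X0 \<in> Xs n a A" by blast
        define C3 where "C3 = {x\<in>C. typ3 x}"
        have C3ne: "C3 \<noteq> {}" using True unfolding C3_def by auto
        have fC: "finite C" using CQ by (rule quadric_sub_finite)
        have fC3: "finite C3" using fC unfolding C3_def by simp
        have C3v: "C3 \<subseteq> vecs n" "\<forall>x\<in>C3. qform n a x = 0" using CQ unfolding C3_def by (auto simp: quadric_iff)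
        have C3o: "\<forall>x\<in>C3. \<forall>y\<in>C3. Bf n a x y = 0" using key unfolding C3_def typ3_def by auto
        obtain W where W: "TS n a W" "C3 \<subseteq> W" "\<forall>w\<in>W. \<forall>y. (\<forall>d\<in>C3. Bf n a d y = 0) \<longrightarrow> Bf n a w y = 0"
          using span_lemma[OF fC3 C3v C3o] by blast
        obtain L where L: "set L = C3" using finite_list[OF fC3] by blast
        have sAz: "subgrp (A \<union> {zv})" using Az_TS unfolding TS_def by simp
        have sW: "subgrp W" using W(1) unfolding TS_def by simp
        have psi: "\<forall>x y. Bf n a (vadd x y) X0 = Bf n a x X0 + Bf n a y X0" by (simp add: Bf_add1)
        have typ3_wit: "\<exists>b\<in>A. Bf n a b x = 1" if "x \<in> C" "typ3 x" for x
          using not_Xs_wit that CQ unfolding typ3_def by auto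
        have ortA: "Bf n a b y = 0" if "b \<in> A" "y \<in> C" "\<not> typ3 y" for b y
          using that A_orth Xs_iff unfolding typ3_def by auto
        from dich[OF sAz sW psi, of L] L W(2)
        have "(\<exists>b\<in>A \<union> {zv}. \<forall>x\<in>C3. Bf n a x b = Bf n a x X0) \<or>
              (\<exists>r\<in>W. (\<forall>b\<in>A \<union> {zv}. Bf n a r b = 0) \<and> Bf n a r X0 = 1)" by simp
        then show ?thesis
        proof
          assume "\<exists>b\<in>A \<union> {zv}. \<forall>x\<in>C3. Bf n a x b = Bf n a x X0"
          then obtain b where b: "b \<in> A \<union> {zv}" "\<forall>x\<in>C3. Bf n a x b = 1"
            using key X0 unfolding C3_def by auto
          have bA: "b \<in> A" using b C3ne by auto
          have hb: "Bf n a y b = (if typ3 y then 1 else 0)" "Bf n a b y = (if typ3 y then 1 else 0)"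
            if "y \<in> C" for y
            using b(2) ortA[OF bA that] that unfolding C3_def by (auto simp: Bf_sym)
          define f where "f x = (if x \<in> Xs n a A then vadd x b else x)" for x
          have fq: "f x \<in> quadric n a" if "x \<in> C" for x
          proof (cases "x \<in> Xs n a A")
            case True
            then have "x \<noteq> b" "\<not> typ3 x" using Xs_iff bA unfolding typ3_def by auto
            then show ?thesis using True Xq[OF True] Aq'[OF bA] hb[OF that] unfolding f_def
              by (auto simp: quadric_iff qform_vadd vecs_vadd vadd_eq_zv)
          qed (use that CQ f_def in auto)
          have finj: "inj_on f C"
          proof (rule inj_onI)
            fix x y assume xy: "x \<in> C" "y \<in> C" "f x = f y"
            have c: False if "x \<in> Xs n a A" "y \<notin> Xs n a A" "vadd x b = y" "x \<in> C" "y \<in> C" for x y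
            proof (cases "y \<in> A")
              case True
              have "x = vadd y b" using that(3) by (metis vadd_cancel(2))
              then have "x \<in> A \<union> {zv}" using sAz True bA unfolding subgrp_def by blast
              then show False using that(1) Xs_iff by (auto simp: quadric_iff)
            next
              case False
              have "\<forall>c\<in>A. Bf n a c y = 0" using that Xs_iff A_orth bA by (auto simp: Bf_add2)
              then have "y \<in> Xs n a A" using Xs_iff False that CQ by auto
              then show False using that by simp
            qed
            show "x = y"
            proof (cases "x \<in> Xs n a A"; cases "y \<in> Xs n a A")
              assume "x \<in> Xs n a A" "y \<in> Xs n a A" then show ?thesis using xy(3) unfolding f_def by (simp add: vadd_inj2)
            next
              assume h: "x \<in> Xs n a A" "y \<notin> Xs n a A"
              then have "vadd x b = y" using xy(3) unfolding f_def by simp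
              then show ?thesis using h xy c[of x y] by blast
            next
              assume h: "x \<notin> Xs n a A" "y \<in> Xs n a A"
              then have "vadd y b = x" using xy(3) unfolding f_def by simp
              then show ?thesis using h xy c[of y x] by blast
            next
              assume "x \<notin> Xs n a A" "y \<notin> Xs n a A" then show ?thesis using xy(3) unfolding f_def by simp
            qed
          qed
          have "\<forall>x\<in>C. \<forall>y\<in>C. x \<noteq> y \<longrightarrow> Bf n a (f x) (f y) = 0"
          proof (intro ballI impI)
            fix x y assume xy: "x \<in> C" "y \<in> C" "x \<noteq> y"
            show "Bf n a (f x) (f y) = 0"
              using key[OF xy(1,2)] hb[OF xy(1)] hb[OF xy(2)] unfolding f_def typ3_def
              by (auto simp: Bf_add1 Bf_add2)
          qed
          moreover have "f ` C \<subseteq> quadric n a" using fq by auto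
          ultimately show ?thesis using inj_clique_bound[OF finj] assms(2) by simp
        next
          assume "\<exists>r\<in>W. (\<forall>b\<in>A \<union> {zv}. Bf n a r b = 0) \<and> Bf n a r X0 = 1"
          then obtain r where r: "r \<in> W" "\<forall>b\<in>A. Bf n a r b = 0" "Bf n a r X0 = 1" by blast
          have hr: "Bf n a r y = (if y \<in> Xs n a A then 1 else 0)" if "y \<in> C" for y
          proof (cases "typ3 y")
            case True
            then have "y \<in> W" using that W(2) unfolding C3_def by auto
            then show ?thesis using TS_orth[OF W(1) r(1)] True unfolding typ3_def by auto
          next
            case False
            show ?thesis
            proof (cases "y \<in> Xs n a A")
              case True
              have "\<forall>d\<in>C3. Bf n a d (vadd X0 y) = 0"
                using key X0 True that unfolding C3_def by (auto simp: Bf_add2)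
              then have "Bf n a r (vadd X0 y) = 0" using W(3) r(1) by blast
              then show ?thesis using r(3) True by (simp add: Bf_add2)
                (metis add_0_right bit_add_self bit_not_zero_iff)
            next
              case False
              then have "y \<in> A" using \<open>\<not> typ3 y\<close> unfolding typ3_def by simp
              then show ?thesis using r(2) False by simp
            qed
          qed
          have hr': "Bf n a y r = (if y \<in> Xs n a A then 1 else 0)" if "y \<in> C" for y
            using hr[OF that] by (simp add: Bf_sym)
          have rq: "r \<in> vecs n" "qform n a r = 0" using W(1) r(1) unfolding TS_def by auto
          define f where "f x = (if typ3 x then vadd x r else x)" for x
          have fq: "f x \<in> quadric n a" if xC: "x \<in> C" for x
          proof (cases "typ3 x")
            case True
            obtain b where "b \<in> A" "Bf n a b x = 1" using typ3_wit[OF xC True] by blast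
            then have "x \<noteq> r" using r(2) by (auto simp: Bf_sym)
            moreover have "x \<notin> Xs n a A" using True unfolding typ3_def by simp
            ultimately show ?thesis using True that CQ rq hr'[OF that] unfolding f_def
              by (auto simp: quadric_iff qform_vadd vecs_vadd vadd_eq_zv)
          qed (use that CQ f_def in auto)
          have finj: "inj_on f C"
          proof (rule inj_onI)
            fix x y assume xy: "x \<in> C" "y \<in> C" "f x = f y"
            have c: False if "typ3 x" "\<not> typ3 y" "vadd x r = y" "x \<in> C" "y \<in> C" for x y
            proof -
              have "x = vadd y r" using that(3) by (metis vadd_cancel(2))
              then have "\<forall>c\<in>A. Bf n a c x = 0" using ortA that r(2) by (auto simp: Bf_add2 Bf_sym)
              then have "x \<in> Xs n a A" using Xs_iff that CQ unfolding typ3_def by auto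
              then show False using that unfolding typ3_def by simp
            qed
            show "x = y"
            proof (cases "typ3 x"; cases "typ3 y")
              assume "typ3 x" "typ3 y" then show ?thesis using xy(3) unfolding f_def by (simp add: vadd_inj2)
            next
              assume h: "typ3 x" "\<not> typ3 y"
              then have "vadd x r = y" using xy(3) unfolding f_def by simp
              then show ?thesis using h xy c[of x y] by blast
            next
              assume h: "\<not> typ3 x" "typ3 y"
              then have "vadd y r = x" using xy(3) unfolding f_def by simp
              then show ?thesis using h xy c[of y x] by blast
            next
              assume "\<not> typ3 x" "\<not> typ3 y" then show ?thesis using xy(3) unfolding f_def by simp
            qed
          qed
          have "\<forall>x\<in>C. \<forall>y\<in>C. x \<noteq> y \<longrightarrow> Bf n a (f x) (f y) = 0"
          proof (intro ballI impI)
            fix x y assume xy: "x \<in> C" "y \<in> C" "x \<noteq> y"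
            show "Bf n a (f x) (f y) = 0"
              using key[OF xy(1,2)] hr[OF xy(1)] hr[OF xy(2)] hr'[OF xy(1)] hr'[OF xy(2)] unfolding f_def typ3_def
              by (auto simp: Bf_add1 Bf_add2)
          qed
          moreover have "f ` C \<subseteq> quadric n a" using fq by auto
          ultimately show ?thesis using inj_clique_bound[OF finj] assms(2) by simp
        qed
      qed
    qed
  qed
qed

end
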